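(* Let $\Re$ be a commutative Krasner hyperring with identity $1\ne0$ and $\phi:L(\Re)\to L(\Re)\cup\{\emptyset\}$ a function with $\phi\le\phi_3$. If $T$ is a proper $\phi$-primary hyperideal of $\Re$, then $T$ is a $w$-primary hyperideal.
   Context: Krasner hyperring: $(\Re,\oplus)$ canonical hypergroup, $(\Re,\circ)$ commutative semigroup with identity $1\ne0$, $0$ absorbing, distributive. Hyperideals, $L(\Re)$, powers $N^n$ as usual. $\phi_3(N)=N^3$, $\phi_w(N)=\bigcap_{n\ge1}N^n$; $\phi\le\phi_3$ means $\phi(N)\subseteq N^3$ for all $N$. $N$ is $\sigma$-primary if $a\circ b\in N$, $a\circ b\notin\sigma(N)$ imply $a\in N$ or $b^k\in N$ for some $k\in\mathbb{N}$; $w$-primary means $\phi_w$-primary. *)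

theory Defs
  imports Main
begin

text \<open>A Krasner hyperring on the whole type 'a: hyperaddition, multiplication,
  zero, one, and the (unique) additive inverse.\<close>

record 'a hyperring =
  hadd :: "'a \<Rightarrow> 'a \<Rightarrow> 'a set"
  hmul :: "'a \<Rightarrow> 'a \<Rightarrow> 'a"
  hzero :: 'a
  hone :: 'a
  hneg :: "'a \<Rightarrow> 'a"

definition set_hadd :: "('a, 'b) hyperring_scheme \<Rightarrow> 'a set \<Rightarrow> 'a set \<Rightarrow> 'a set" where
  "set_hadd R A B = (\<Union>a\<in>A. \<Union>b\<in>B. hadd R a b)"

definition canonical_hypergroup :: "('a, 'b) hyperring_scheme \<Rightarrow> bool" where
  "canonical_hypergroup R \<longleftrightarrow>
     (\<forall>x y. hadd R x y \<noteq> {}) \<and>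
     (\<forall>x y z. set_hadd R (hadd R x y) {z} = set_hadd R {x} (hadd R y z)) \<and>
     (\<forall>x y. hadd R x y = hadd R y x) \<and>
     (\<forall>x. hadd R (hzero R) x = {x}) \<and>
     (\<forall>x. hzero R \<in> hadd R x (hneg R x)) \<and>
     (\<forall>x y. hzero R \<in> hadd R x y \<longrightarrow> y = hneg R x) \<and>
     (\<forall>x y z. z \<in> hadd R x y \<longrightarrow> y \<in> hadd R (hneg R x) z \<and> x \<in> hadd R z (hneg R y))"

definition krasner_hyperring :: "('a, 'b) hyperring_scheme \<Rightarrow> bool" where
  "krasner_hyperring R \<longleftrightarrow>
     canonical_hypergroup R \<and>
     (\<forall>x y z. hmul R (hmul R x y) z = hmul R x (hmul R y z)) \<and>
     (\<forall>x y. hmul R x y = hmul R y x) \<and>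
     (\<forall>x. hmul R (hone R) x = x) \<and>
     hone R \<noteq> hzero R \<and>
     (\<forall>x. hmul R (hzero R) x = hzero R) \<and>
     (\<forall>x y z. hmul R z ` hadd R x y = hadd R (hmul R z x) (hmul R z y))"

definition hyperideal :: "('a, 'b) hyperring_scheme \<Rightarrow> 'a set \<Rightarrow> bool" where
  "hyperideal R I \<longleftrightarrow> I \<noteq> {} \<and>
     (\<forall>a\<in>I. \<forall>b\<in>I. hadd R a (hneg R b) \<subseteq> I) \<and>
     (\<forall>a\<in>I. \<forall>r. hmul R r a \<in> I)"

definition hyperideals :: "('a, 'b) hyperring_scheme \<Rightarrow> 'a set set" where
  "hyperideals R = {I. hyperideal R I}"

fun hsum :: "('a, 'b) hyperring_scheme \<Rightarrow> 'a list \<Rightarrow> 'a set" where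
  "hsum R [] = {hzero R}"
| "hsum R (x # xs) = set_hadd R {x} (hsum R xs)"

definition ideal_prod :: "('a, 'b) hyperring_scheme \<Rightarrow> 'a set \<Rightarrow> 'a set \<Rightarrow> 'a set" where
  "ideal_prod R I J =
     {z. \<exists>ps. ps \<noteq> [] \<and> (\<forall>p\<in>set ps. fst p \<in> I \<and> snd p \<in> J) \<and>
            z \<in> hsum R (map (\<lambda>p. hmul R (fst p) (snd p)) ps)}"

text \<open>Powers N^n for n \<ge> 1 (N^0 is set to the whole ring, unused).\<close>
fun ideal_pow :: "('a, 'b) hyperring_scheme \<Rightarrow> 'a set \<Rightarrow> nat \<Rightarrow> 'a set" where
  "ideal_pow R N 0 = UNIV"
| "ideal_pow R N (Suc 0) = N"
| "ideal_pow R N (Suc (Suc n)) = ideal_prod R (ideal_pow R N (Suc n)) N"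

fun elem_pow :: "('a, 'b) hyperring_scheme \<Rightarrow> 'a \<Rightarrow> nat \<Rightarrow> 'a" where
  "elem_pow R b 0 = hone R"
| "elem_pow R b (Suc k) = hmul R b (elem_pow R b k)"

definition phi_3 :: "('a, 'b) hyperring_scheme \<Rightarrow> 'a set \<Rightarrow> 'a set" where
  "phi_3 R N = ideal_pow R N 3"

definition phi_w :: "('a, 'b) hyperring_scheme \<Rightarrow> 'a set \<Rightarrow> 'a set" where
  "phi_w R N = (\<Inter>n\<in>{1..}. ideal_pow R N n)"

text \<open>sigma-primary hyperideal (properness is stated separately).\<close>
definition sigma_primary ::
  "('a, 'b) hyperring_scheme \<Rightarrow> ('a set \<Rightarrow> 'a set) \<Rightarrow> 'a set \<Rightarrow> bool" where
  "sigma_primary R \<sigma> N \<longleftrightarrow> hyperideal R N \<and>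
     (\<forall>a b. hmul R a b \<in> N \<and> hmul R a b \<notin> \<sigma> N \<longrightarrow>
        a \<in> N \<or> (\<exists>k\<ge>1. elem_pow R b k \<in> N))"

definition w_primary :: "('a, 'b) hyperring_scheme \<Rightarrow> 'a set \<Rightarrow> bool" where
  "w_primary R N \<longleftrightarrow> sigma_primary R (phi_w R) N"

end

theory Submission
  imports Defs
begin

context
  fixes R :: "('a, 'b) hyperring_scheme"
  assumes K: "krasner_hyperring R"
begin

lemma CH: "canonical_hypergroup R" using K by (simp add: krasner_hyperring_def)
lemmas CHD = CH[unfolded canonical_hypergroup_def]
lemmas KD = K[unfolded krasner_hyperring_def]

lemma kh_assoc: "hmul R (hmul R x y) z = hmul R x (hmul R y z)"
  using KD by meson
lemma kh_comm: "hmul R x y = hmul R y x"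
  using KD by meson
lemma kh_one: "hmul R (hone R) x = x"
  using KD by meson
lemma kh_zero: "hmul R (hzero R) x = hzero R"
  using KD by meson
lemma kh_dist: "hmul R z ` hadd R x y = hadd R (hmul R z x) (hmul R z y)"
  using KD by meson
lemma kh_ne: "hadd R x y \<noteq> {}"
  using CHD by meson
lemma kh_hassoc: "set_hadd R (hadd R x y) {z} = set_hadd R {x} (hadd R y z)"
  using CHD by meson
lemma kh_acomm: "hadd R x y = hadd R y x"
  using CHD by meson
lemma kh_azero: "hadd R (hzero R) x = {x}"
  using CHD by meson
lemma kh_negin: "hzero R \<in> hadd R x (hneg R x)"
  using CHD by meson
lemma kh_neguniq: "hzero R \<in> hadd R x y \<Longrightarrow> y = hneg R x"
  using CHD by meson
lemma kh_rev: "z \<in> hadd R x y \<Longrightarrow> y \<in> hadd R (hneg R x) z \<and> x \<in> hadd R z (hneg R y)"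
  using CHD by meson

lemma kh_negneg: "hneg R (hneg R y) = y"
proof -
  have "hzero R \<in> hadd R (hneg R y) y" using kh_negin[of y] kh_acomm[of y "hneg R y"] by simp
  then show ?thesis using kh_neguniq[of "hneg R y" y] by simp
qed

lemma kh_negmul: "hmul R y (hneg R (hone R)) = hneg R y"
proof -
  have "hmul R y (hzero R) \<in> hmul R y ` hadd R (hone R) (hneg R (hone R))"
    using kh_negin by blast
  moreover have "hmul R y (hzero R) = hzero R" using kh_comm[of y "hzero R"] kh_zero by simp
  moreover have "hmul R y (hone R) = y" using kh_comm[of y "hone R"] kh_one by simp
  ultimately have "hzero R \<in> hadd R y (hmul R y (hneg R (hone R)))"
    using kh_dist[of y "hone R" "hneg R (hone R)"] by simp
  then show ?thesis using kh_neguniq by blast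
qed

lemma hi_mul: "hyperideal R I \<Longrightarrow> x \<in> I \<Longrightarrow> hmul R r x \<in> I"
  by (simp add: hyperideal_def)
lemma hi_mul2: "hyperideal R I \<Longrightarrow> x \<in> I \<Longrightarrow> hmul R x r \<in> I"
proof -
  assume a: "hyperideal R I" "x \<in> I"
  have "hmul R x r = hmul R r x" by (rule kh_comm)
  then show ?thesis using hi_mul[OF a] by simp
qed
lemma hi_neg: "hyperideal R I \<Longrightarrow> x \<in> I \<Longrightarrow> hneg R x \<in> I"
  using kh_negmul[of x] hi_mul2[of I x "hneg R (hone R)"] by simp
lemma hi_sub: "hyperideal R I \<Longrightarrow> x \<in> I \<Longrightarrow> y \<in> I \<Longrightarrow> hadd R x (hneg R y) \<subseteq> I"
  by (simp add: hyperideal_def)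
lemma hi_add: "hyperideal R I \<Longrightarrow> x \<in> I \<Longrightarrow> y \<in> I \<Longrightarrow> hadd R x y \<subseteq> I"
  using hi_sub[of I x "hneg R y"] hi_neg[of I y] kh_negneg[of y] by simp

lemma set_hadd_assoc_sub:
  "set_hadd R (set_hadd R A B) C \<subseteq> set_hadd R A (set_hadd R B C)"
proof
  fix w assume "w \<in> set_hadd R (set_hadd R A B) C"
  then obtain a b c u where abc: "a \<in> A" "b \<in> B" "c \<in> C" "u \<in> hadd R a b" "w \<in> hadd R u c"
    by (auto simp: set_hadd_def)
  then have "w \<in> set_hadd R (hadd R a b) {c}" by (auto simp: set_hadd_def)
  then have "w \<in> set_hadd R {a} (hadd R b c)" using kh_hassoc by simp
  then obtain v where "v \<in> hadd R b c" "w \<in> hadd R a v" by (auto simp: set_hadd_def)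
  then show "w \<in> set_hadd R A (set_hadd R B C)" using abc by (auto simp: set_hadd_def)
qed

lemma set_hadd_mono: "B \<subseteq> B' \<Longrightarrow> set_hadd R A B \<subseteq> set_hadd R A B'"
  by (auto simp: set_hadd_def)

lemma hsum_append: "w \<in> set_hadd R (hsum R L1) (hsum R L2) \<Longrightarrow> w \<in> hsum R (L1 @ L2)"
proof (induction L1 arbitrary: w)
  case Nil
  then show ?case using kh_azero by (auto simp: set_hadd_def)
next
  case (Cons x L1)
  have "w \<in> set_hadd R {x} (set_hadd R (hsum R L1) (hsum R L2))"
    using Cons.prems set_hadd_assoc_sub by auto
  moreover have "set_hadd R (hsum R L1) (hsum R L2) \<subseteq> hsum R (L1 @ L2)"
    using Cons.IH by blast
  ultimately show ?case using set_hadd_mono[of "set_hadd R (hsum R L1) (hsum R L2)" "hsum R (L1 @ L2)" "{x}"] by auto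
qed

lemma set_hadd_single0[simp]: "set_hadd R {x} {hzero R} = {x}"
proof -
  have "hadd R x (hzero R) = {x}" using kh_azero[of x] kh_acomm[of x "hzero R"] by simp
  then show ?thesis by (simp add: set_hadd_def)
qed

lemma hsum_single: "hsum R [x] = {x}"
  by simp

lemma prod_add:
  assumes "u \<in> ideal_prod R I J" "v \<in> ideal_prod R I J" "w \<in> hadd R u v"
  shows "w \<in> ideal_prod R I J"
proof -
  obtain ps where ps: "ps \<noteq> []" "\<forall>p\<in>set ps. fst p \<in> I \<and> snd p \<in> J"
    "u \<in> hsum R (map (\<lambda>p. hmul R (fst p) (snd p)) ps)"
    using assms(1) by (auto simp: ideal_prod_def)
  obtain qs where qs: "qs \<noteq> []" "\<forall>p\<in>set qs. fst p \<in> I \<and> snd p \<in> J"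
    "v \<in> hsum R (map (\<lambda>p. hmul R (fst p) (snd p)) qs)"
    using assms(2) by (auto simp: ideal_prod_def)
  have "w \<in> set_hadd R (hsum R (map (\<lambda>p. hmul R (fst p) (snd p)) ps))
                         (hsum R (map (\<lambda>p. hmul R (fst p) (snd p)) qs))"
    using ps(3) qs(3) assms(3) by (auto simp: set_hadd_def)
  then have "w \<in> hsum R (map (\<lambda>p. hmul R (fst p) (snd p)) (ps @ qs))"
    using hsum_append by simp
  then show ?thesis unfolding ideal_prod_def using ps qs
    by (intro CollectI exI[of _ "ps @ qs"]) auto
qed

lemma prod_contains: "x \<in> I \<Longrightarrow> y \<in> J \<Longrightarrow> hmul R x y \<in> ideal_prod R I J"
  unfolding ideal_prod_def
  by (intro CollectI exI[of _ "[(x,y)]"]) (simp add: hsum_single)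

lemma prod_hsum_closed:
  "xs \<noteq> [] \<Longrightarrow> set xs \<subseteq> ideal_prod R I J \<Longrightarrow> hsum R xs \<subseteq> ideal_prod R I J"
proof (induction xs)
  case Nil then show ?case by simp
next
  case (Cons x xs)
  show ?case
  proof (cases "xs = []")
    case True then show ?thesis using Cons.prems by (simp add: hsum_single)
  next
    case False
    then have "hsum R xs \<subseteq> ideal_prod R I J" using Cons by auto
    show ?thesis
    proof
      fix w assume "w \<in> hsum R (x # xs)"
      then obtain v where v: "v \<in> hsum R xs" "w \<in> hadd R x v" by (auto simp: set_hadd_def)
      have x: "x \<in> ideal_prod R I J" using Cons.prems by simp
      show "w \<in> ideal_prod R I J" using prod_add[OF x _ v(2)] v(1) \<open>hsum R xs \<subseteq> ideal_prod R I J\<close> by blast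
    qed
  qed
qed

lemma prod_sub:
  assumes "\<forall>x\<in>I. \<forall>y\<in>J. hmul R x y \<in> ideal_prod R I' J'"
  shows "ideal_prod R I J \<subseteq> ideal_prod R I' J'"
proof
  fix w assume "w \<in> ideal_prod R I J"
  then obtain ps where ps: "ps \<noteq> []" "\<forall>p\<in>set ps. fst p \<in> I \<and> snd p \<in> J"
    "w \<in> hsum R (map (\<lambda>p. hmul R (fst p) (snd p)) ps)"
    by (auto simp: ideal_prod_def)
  have "hsum R (map (\<lambda>p. hmul R (fst p) (snd p)) ps) \<subseteq> ideal_prod R I' J'"
    using ps(1,2) assms by (intro prod_hsum_closed) auto
  then show "w \<in> ideal_prod R I' J'" using ps(3) by blast
qed

lemma prod_mono: "I \<subseteq> I' \<Longrightarrow> ideal_prod R I J \<subseteq> ideal_prod R I' J"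
  unfolding ideal_prod_def by blast

lemma pow_lemma:
  assumes T: "hyperideal R T" and c: "c \<in> hadd R b x" and x: "x \<in> T"
    and ck: "elem_pow R c k \<in> T"
  shows "elem_pow R b k \<in> T"
proof -
  have "\<forall>i. i \<le> k \<longrightarrow> hmul R (elem_pow R b i) (elem_pow R c (k - i)) \<in> T"
  proof
    fix i show "i \<le> k \<longrightarrow> hmul R (elem_pow R b i) (elem_pow R c (k - i)) \<in> T"
    proof (induction i)
      case 0 then show ?case using ck kh_one by simp
    next
      case (Suc i)
      show ?case
      proof
        assume ik: "Suc i \<le> k"
        define e where "e = elem_pow R c (k - Suc i)"
        define d where "d = elem_pow R b i"
        have kk: "k - i = Suc (k - Suc i)" using ik by simp
        have z: "hmul R d (hmul R c e) \<in> T" using Suc ik kk unfolding d_def e_def by simp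
        have "hmul R c e = hmul R e c" by (rule kh_comm)
        also have "\<dots> \<in> hadd R (hmul R e b) (hmul R e x)" using c kh_dist by blast
        finally have "hmul R d (hmul R c e) \<in> hadd R (hmul R d (hmul R e b)) (hmul R d (hmul R e x))"
          using kh_dist by blast
        then have "hmul R d (hmul R e b) \<in> hadd R (hmul R d (hmul R c e)) (hneg R (hmul R d (hmul R e x)))"
          using kh_rev by blast
        moreover have "hmul R d (hmul R e x) \<in> T" using hi_mul[OF T x] T by (simp add: hi_mul)
        ultimately have "hmul R d (hmul R e b) \<in> T" using hi_sub[OF T z] by blast
        moreover have "hmul R d (hmul R e b) = hmul R (elem_pow R b (Suc i)) e"
        proof -
          have "hmul R (elem_pow R b (Suc i)) e = hmul R (hmul R b d) e" unfolding d_def by simp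
          also have "\<dots> = hmul R b (hmul R d e)" by (rule kh_assoc)
          also have "\<dots> = hmul R (hmul R d e) b" by (rule kh_comm)
          also have "\<dots> = hmul R d (hmul R e b)" by (rule kh_assoc)
          finally show ?thesis by simp
        qed
        ultimately show "hmul R (elem_pow R b (Suc i)) (elem_pow R c (k - Suc i)) \<in> T"
          unfolding e_def by simp
      qed
    qed
  qed
  then have "k \<le> k \<longrightarrow> hmul R (elem_pow R b k) (elem_pow R c (k - k)) \<in> T" by (rule spec)
  then have "hmul R (elem_pow R b k) (hone R) \<in> T" by simp
  then show ?thesis using kh_one[of "elem_pow R b k"] kh_comm[of "elem_pow R b k" "hone R"] by simp
qed

end

theorem mainTheorem13:
  fixes R :: "('a, 'b) hyperring_scheme"
    and \<phi> :: "'a set \<Rightarrow> 'a set"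
    and T :: "'a set"
  assumes "krasner_hyperring R"
    and "\<forall>N\<in>hyperideals R. \<phi> N \<in> hyperideals R \<or> \<phi> N = {}"
    and "\<forall>N\<in>hyperideals R. \<phi> N \<subseteq> phi_3 R N"
    and "T \<noteq> UNIV"
    and "sigma_primary R \<phi> T"
  shows "w_primary R T"
proof -
  note K = assms(1)
  have TI: "hyperideal R T" using assms(5) by (simp add: sigma_primary_def)
  have prim: "\<And>a b. hmul R a b \<in> T \<Longrightarrow> hmul R a b \<notin> \<phi> T \<Longrightarrow>
        a \<in> T \<or> (\<exists>k\<ge>1. elem_pow R b k \<in> T)"
    using assms(5) by (simp add: sigma_primary_def)
  show ?thesis unfolding w_primary_def sigma_primary_def
  proof (intro conjI TI allI impI)
    fix a b assume ab: "hmul R a b \<in> T \<and> hmul R a b \<notin> phi_w R T"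
    show "a \<in> T \<or> (\<exists>k\<ge>1. elem_pow R b k \<in> T)"
    proof (rule ccontr)
      assume neg: "\<not> (a \<in> T \<or> (\<exists>k\<ge>1. elem_pow R b k \<in> T))"
      have abphi: "hmul R a b \<in> \<phi> T" using prim ab neg by blast
      have TH: "T \<in> hyperideals R" using TI by (simp add: hyperideals_def)
      have PI: "hyperideal R (\<phi> T)" using assms(2) TH abphi by (auto simp: hyperideals_def)
      have P2T: "ideal_prod R T T \<subseteq> T"
      proof
        fix w assume "w \<in> ideal_prod R T T"
        then obtain ps where ps: "\<forall>p\<in>set ps. fst p \<in> T \<and> snd p \<in> T"
          "w \<in> hsum R (map (\<lambda>p. hmul R (fst p) (snd p)) ps)"
          by (auto simp: ideal_prod_def)
        have "\<And>xs. set xs \<subseteq> T \<Longrightarrow> hsum R xs \<subseteq> T"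
        proof -
          fix xs :: "'a list" show "set xs \<subseteq> T \<Longrightarrow> hsum R xs \<subseteq> T"
          proof (induction xs)
            case Nil
            obtain t where "t \<in> T" using TI by (auto simp: hyperideal_def)
            then have "hmul R (hzero R) t \<in> T" using hi_mul[OF K TI] by blast
            then show ?case using kh_zero[OF K] by simp
          next
            case (Cons y ys)
            then show ?case using hi_add[OF K TI] by (auto simp: set_hadd_def)
          qed
        qed
        moreover have "set (map (\<lambda>p. hmul R (fst p) (snd p)) ps) \<subseteq> T"
          using ps(1) hi_mul2[OF K TI] by auto
        ultimately show "w \<in> T" using ps(2) by blast
      qed
      have T3: "ideal_pow R T 3 = ideal_prod R (ideal_prod R T T) T"
        by (simp add: numeral_eq_Suc)
      have T32: "ideal_pow R T 3 \<subseteq> ideal_prod R T T"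
        using T3 prod_mono[OF K P2T] by simp
      have PT3: "\<phi> T \<subseteq> ideal_pow R T 3" using assms(3) TH by (simp add: phi_3_def)
      have PT: "\<phi> T \<subseteq> T" using PT3 T32 P2T by blast
      have nb: "\<And>k. k \<ge> 1 \<Longrightarrow> elem_pow R b k \<notin> T" using neg by blast
      have na: "a \<notin> T" using neg by blast
      have s1: "\<And>x. x \<in> T \<Longrightarrow> hmul R a x \<in> \<phi> T"
      proof -
        fix x assume x: "x \<in> T"
        obtain c where c: "c \<in> hadd R b x" using kh_ne[OF K] by blast
        have ac: "hmul R a c \<in> hadd R (hmul R a b) (hmul R a x)" using c kh_dist[OF K] by blast
        have "hmul R a c \<in> T" using ac hi_add[OF K TI conjunct1[OF ab] hi_mul[OF K TI x]] by blast
        moreover have "\<not> (\<exists>k\<ge>1. elem_pow R c k \<in> T)"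
          using pow_lemma[OF K TI c x] nb by blast
        ultimately have acp: "hmul R a c \<in> \<phi> T" using prim na by blast
        have "hmul R a x \<in> hadd R (hneg R (hmul R a b)) (hmul R a c)" using kh_rev[OF K ac] by blast
        then show "hmul R a x \<in> \<phi> T"
          using hi_add[OF K PI acp hi_neg[OF K PI abphi]] kh_acomm[OF K] by blast
      qed
      have s2: "\<And>y. y \<in> T \<Longrightarrow> hmul R b y \<in> \<phi> T"
      proof -
        fix y assume y: "y \<in> T"
        obtain c where c: "c \<in> hadd R a y" using kh_ne[OF K] by blast
        have bc: "hmul R b c \<in> hadd R (hmul R b a) (hmul R b y)" using c kh_dist[OF K] by blast
        have ba: "hmul R b a = hmul R a b" by (rule kh_comm[OF K])
        have cbc: "hmul R c b = hmul R b c" by (rule kh_comm[OF K])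
        have "hmul R b c \<in> T" using bc ba hi_add[OF K TI _ hi_mul[OF K TI y]] ab by auto
        then have "hmul R c b \<in> T" using cbc by simp
        moreover have "c \<notin> T"
        proof
          assume "c \<in> T"
          then have "a \<in> T" using kh_rev[OF K c] hi_sub[OF K TI _ y] by blast
          then show False using na by blast
        qed
        ultimately have cbp: "hmul R c b \<in> \<phi> T" using prim nb by blast
        have "hmul R b y \<in> hadd R (hneg R (hmul R b a)) (hmul R b c)" using kh_rev[OF K bc] by blast
        then show "hmul R b y \<in> \<phi> T"
          using hi_add[OF K PI cbp hi_neg[OF K PI abphi]] kh_acomm[OF K] ba cbc by auto
      qed
      have s3: "\<And>x y. x \<in> T \<Longrightarrow> y \<in> T \<Longrightarrow> hmul R x y \<in> \<phi> T"
      proof -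
        fix x y assume x: "x \<in> T" and y: "y \<in> T"
        obtain c where c: "c \<in> hadd R a y" using kh_ne[OF K] by blast
        obtain d where d: "d \<in> hadd R b x" using kh_ne[OF K] by blast
        have cb0: "hmul R b c \<in> hadd R (hmul R b a) (hmul R b y)" using c kh_dist[OF K] by blast
        have cbp: "hmul R c b \<in> \<phi> T"
        proof -
          have "hmul R b a \<in> \<phi> T" using abphi kh_comm[OF K, of b a] by simp
          then have "hmul R b c \<in> \<phi> T" using cb0 hi_add[OF K PI _ s2[OF y]] by blast
          then show ?thesis using kh_comm[OF K, of c b] by simp
        qed
        have xc: "hmul R x c \<in> hadd R (hmul R x a) (hmul R x y)" using c kh_dist[OF K] by blast
        have xcT: "hmul R c x \<in> T"
        proof -
          have "hadd R (hmul R x a) (hmul R x y) \<subseteq> T" by (rule hi_add[OF K TI hi_mul2[OF K TI x] hi_mul2[OF K TI x]])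
          then have "hmul R x c \<in> T" using xc by blast
          then show ?thesis using kh_comm[OF K, of c x] by simp
        qed
        have cd: "hmul R c d \<in> hadd R (hmul R c b) (hmul R c x)" using d kh_dist[OF K] by blast
        have "hadd R (hmul R c b) (hmul R c x) \<subseteq> T" by (rule hi_add[OF K TI subsetD[OF PT cbp] xcT])
        then have "hmul R c d \<in> T" using cd by blast
        moreover have "c \<notin> T"
        proof
          assume "c \<in> T"
          then have "a \<in> T" using kh_rev[OF K c] hi_sub[OF K TI _ y] by blast
          then show False using na by blast
        qed
        moreover have "\<not> (\<exists>k\<ge>1. elem_pow R d k \<in> T)"
          using pow_lemma[OF K TI d x] nb by blast
        ultimately have cdp: "hmul R c d \<in> \<phi> T" using prim[of c d] by blast
        have "hmul R c x \<in> hadd R (hneg R (hmul R c b)) (hmul R c d)" using kh_rev[OF K cd] by blast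
        then have cxp: "hmul R c x \<in> \<phi> T"
          using hi_add[OF K PI cdp hi_neg[OF K PI cbp]] kh_acomm[OF K] by blast
        have xap: "hmul R x a \<in> \<phi> T" using s1[OF x] kh_comm[OF K, of x a] by simp
        have cxp': "hmul R x c \<in> \<phi> T" using cxp kh_comm[OF K, of c x] by simp
        have "hmul R x y \<in> hadd R (hneg R (hmul R x a)) (hmul R x c)" using kh_rev[OF K xc] by blast
        then show "hmul R x y \<in> \<phi> T"
          using hi_add[OF K PI cxp' hi_neg[OF K PI xap]] kh_acomm[OF K] by blast
      qed
      have S23: "ideal_prod R T T \<subseteq> ideal_prod R (ideal_prod R T T) T"
        using s3 T3 PT3 by (intro prod_sub[OF K]) auto
      have T2n: "ideal_prod R T T \<subseteq> ideal_pow R T n" if "n \<ge> 2" for n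
        using that
      proof (induction n rule: dec_induct)
        case base then show ?case by (simp add: numeral_eq_Suc)
      next
        case (step n)
        then obtain m where m: "n = Suc m" by (cases n) auto
        have e: "ideal_pow R T (Suc n) = ideal_prod R (ideal_pow R T n) T" using m by simp
        have "ideal_prod R (ideal_prod R T T) T \<subseteq> ideal_pow R T (Suc n)"
          unfolding e by (rule prod_mono[OF K step.IH])
        then show ?case using S23 by blast
      qed
      have "hmul R a b \<in> phi_w R T"
        unfolding phi_w_def
      proof
        fix n assume "n \<in> {1::nat..}"
        show "hmul R a b \<in> ideal_pow R T n"
        proof (cases "n = 1")
          case True then show ?thesis using ab by simp
        next
          case False
          then have "n \<ge> 2" using \<open>n \<in> {1..}\<close> by auto
          then show ?thesis using T2n[OF \<open>n \<ge> 2\<close>] abphi PT3 T32 by blast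
        qed
      qed
      then show False using ab by blast
    qed
  qed
qed

end
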